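(* Suppose Assumptions (A3) and (A6) hold, and let $\chi_2=e^{-\omega}+2\delta M$. Then for every $n\ge0$ and $N\ge1$, almost surely, $$\mathcal{W}_1(\mu_{n+1}^N,\mu_{n+1})\le\mathcal{W}_1(\eta_{n+1}^N,\mu_{n+1})+\delta M\sum_{k=0}^n\chi_2^{n-k}\,\mathcal{W}_1(\eta_k^N,\mu_k).$$
   Context: Setting. Fix integers $d,m\ge1$, a real $d\times d$ matrix $A$ with operator norm $\|A\|$, $\delta\ge0$, a Borel probability measure $\theta$ on $\mathbb{R}^m$, and a measurable $f:\mathbb{R}^d\times\mathcal{P}_1(\mathbb{R}^d)\times\mathbb{R}^m\to\mathbb{R}^d$. $\mathcal{P}_1(\mathbb{R}^d)$: Borel probability measures on $\mathbb{R}^d$ with finite first moment, with the Wasserstein-1 distance $\mathcal{W}_1(\mu,\nu)=\inf E|X-Y|$ over couplings. Particle system: for each $N\ge1$, $\{X_0^{i,N}\}_{i=1}^N$ are exchangeable, each with law $\mu_0\in\mathcal{P}_1(\mathbb{R}^d)$; $\{\epsilon_n^i\}_{i,n\ge1}$ i.i.d. with law $\theta$, independent of the initial conditions; $X_{n+1}^{i,N}=AX_n^{i,N}+\delta f(X_n^{i,N},\mu_n^N,\epsilon_{n+1}^i)$, $\mu_n^N=\frac1N\sum_{i=1}^N\delta_{X_n^{i,N}}$. Nonlinear evolution: $\Psi(\mu)$ is the law of $AX+\delta f(X,\mu,\epsilon)$ with $(X,\epsilon)\sim\mu\otimes\theta$, and $\mu_{n+1}=\Psi(\mu_n)$. Auxiliary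 system (same noise): $Y_0^{i,N}=X_0^{i,N}$ and $Y_{n+1}^{i,N}=AY_n^{i,N}+\delta f(Y_n^{i,N},\mu_n,\epsilon_{n+1}^i)$ for $n\ge0$, $i=1,\dots,N$; $\eta_n^N:=\frac1N\sum_{i=1}^N\delta_{Y_n^{i,N}}$. $D(z):=\sup\frac{|f(x_1,\mu_1,z)-f(x_2,\mu_2,z)|}{|x_1-x_2|+\mathcal{W}_1(\mu_1,\mu_2)}$ (supremum over $(x_1,\mu_1)\neq(x_2,\mu_2)$), $D_1(z):=|f(0,\delta_0,z)|$. (A3): $\|A\|\le e^{-\omega}$ for some $\omega>0$. (A6): (i) for some $M\in(1,\infty)$, $D(z)\le M$ for $\theta$-a.e. $z$; (ii) there is $\alpha>0$ with $\int e^{\alpha|x|}\mu_0(dx)<\infty$ and $\int e^{\alpha D_1(z)}\theta(dz)<\infty$. *)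

theory Defs
  imports "HOL-Probability.Probability"
begin

definition P1 :: "('a::euclidean_space) measure set" where
  "P1 = {\<mu>. sets \<mu> = sets borel \<and> prob_space \<mu> \<and> (\<integral>\<^sup>+ x. ennreal (norm x) \<partial>\<mu>) < \<infinity>}"

definition couplings :: "('a::euclidean_space) measure \<Rightarrow> 'a measure \<Rightarrow> ('a \<times> 'a) measure set" where
  "couplings \<mu> \<nu> = {\<pi>. sets \<pi> = sets (borel \<Otimes>\<^sub>M borel) \<and> prob_space \<pi> \<and>
      distr \<pi> borel fst = \<mu> \<and> distr \<pi> borel snd = \<nu>}"

definition W1 :: "('a::euclidean_space) measure \<Rightarrow> 'a measure \<Rightarrow> ennreal" where
  "W1 \<mu> \<nu> = (INF \<pi>\<in>couplings \<mu> \<nu>. \<integral>\<^sup>+ p. ennreal (dist (fst p) (snd p)) \<partial>\<pi>)"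

definition emp :: "nat \<Rightarrow> (nat \<Rightarrow> 'a::euclidean_space) \<Rightarrow> 'a measure" where
  "emp N x = distr (uniform_count_measure {1..N}) borel x"

definition Dlip :: "('a::euclidean_space \<Rightarrow> 'a measure \<Rightarrow> 'z \<Rightarrow> 'a) \<Rightarrow> 'z \<Rightarrow> ennreal" where
  "Dlip f z = (SUP q\<in>{(x1, \<mu>1, x2, \<mu>2). \<mu>1 \<in> P1 \<and> \<mu>2 \<in> P1 \<and> (x1, \<mu>1) \<noteq> (x2, \<mu>2)}.
      (case q of (x1, \<mu>1, x2, \<mu>2) \<Rightarrow>
        ennreal (dist (f x1 \<mu>1 z) (f x2 \<mu>2 z)) / (ennreal (dist x1 x2) + W1 \<mu>1 \<mu>2)))"

definition D1 :: "('a::euclidean_space \<Rightarrow> 'a measure \<Rightarrow> 'z \<Rightarrow> 'a) \<Rightarrow> 'z \<Rightarrow> real" where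
  "D1 f z = norm (f 0 (return borel 0) z)"

definition Psi :: "real^'d^'d \<Rightarrow> real \<Rightarrow> (real^'d \<Rightarrow> (real^'d) measure \<Rightarrow> real^'m \<Rightarrow> real^'d)
     \<Rightarrow> (real^'m) measure \<Rightarrow> (real^'d) measure \<Rightarrow> (real^'d) measure" where
  "Psi A \<delta> f \<theta> \<mu> = distr (\<mu> \<Otimes>\<^sub>M \<theta>) borel (\<lambda>(x, z). A *v x + \<delta> *\<^sub>R f x \<mu> z)"

definition nonlin :: "real^'d^'d \<Rightarrow> real \<Rightarrow> (real^'d \<Rightarrow> (real^'d) measure \<Rightarrow> real^'m \<Rightarrow> real^'d)
     \<Rightarrow> (real^'m) measure \<Rightarrow> (real^'d) measure \<Rightarrow> nat \<Rightarrow> (real^'d) measure" where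
  "nonlin A \<delta> f \<theta> \<mu>0 n = (Psi A \<delta> f \<theta> ^^ n) \<mu>0"

text \<open>Particle system X_n^{i,N}(w); X0 N i = X_0^{i,N}, eps i n = epsilon_n^i.\<close>
primrec particle :: "real^'d^'d \<Rightarrow> real \<Rightarrow> (real^'d \<Rightarrow> (real^'d) measure \<Rightarrow> real^'m \<Rightarrow> real^'d)
     \<Rightarrow> (nat \<Rightarrow> nat \<Rightarrow> 'w \<Rightarrow> real^'d) \<Rightarrow> (nat \<Rightarrow> nat \<Rightarrow> 'w \<Rightarrow> real^'m) \<Rightarrow> nat \<Rightarrow> nat
     \<Rightarrow> nat \<Rightarrow> 'w \<Rightarrow> real^'d" where
  "particle A \<delta> f X0 \<epsilon> N 0 = X0 N"
| "particle A \<delta> f X0 \<epsilon> N (Suc n) = (\<lambda>i w. A *v particle A \<delta> f X0 \<epsilon> N n i w +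
      \<delta> *\<^sub>R f (particle A \<delta> f X0 \<epsilon> N n i w) (emp N (\<lambda>j. particle A \<delta> f X0 \<epsilon> N n j w)) (\<epsilon> i (Suc n) w))"

primrec aux :: "real^'d^'d \<Rightarrow> real \<Rightarrow> (real^'d \<Rightarrow> (real^'d) measure \<Rightarrow> real^'m \<Rightarrow> real^'d)
     \<Rightarrow> (real^'m) measure \<Rightarrow> (real^'d) measure
     \<Rightarrow> (nat \<Rightarrow> nat \<Rightarrow> 'w \<Rightarrow> real^'d) \<Rightarrow> (nat \<Rightarrow> nat \<Rightarrow> 'w \<Rightarrow> real^'m) \<Rightarrow> nat \<Rightarrow> nat
     \<Rightarrow> nat \<Rightarrow> 'w \<Rightarrow> real^'d" where
  "aux A \<delta> f \<theta> \<mu>0 X0 \<epsilon> N 0 = X0 N"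
| "aux A \<delta> f \<theta> \<mu>0 X0 \<epsilon> N (Suc n) = (\<lambda>i w. A *v aux A \<delta> f \<theta> \<mu>0 X0 \<epsilon> N n i w +
      \<delta> *\<^sub>R f (aux A \<delta> f \<theta> \<mu>0 X0 \<epsilon> N n i w) (nonlin A \<delta> f \<theta> \<mu>0 n) (\<epsilon> i (Suc n) w))"

end

theory Submission
  imports Defs
begin


lemma nn_integral_ucm:
  assumes "finite A"
  shows "(\<integral>\<^sup>+x. g x \<partial>uniform_count_measure A) = (\<Sum>a\<in>A. g a) / of_nat (card A)"
proof (cases "A = {}")
  case False
  then have "card A > 0" using assms by (simp add: card_gt_0_iff)
  then have "ennreal (1 / real (card A)) = inverse (of_nat (card A))"
    by (simp add: inverse_ennreal ennreal_of_nat_eq_real_of_nat inverse_eq_divide)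
  moreover have "(\<integral>\<^sup>+x. g x \<partial>uniform_count_measure A) = (\<Sum>a\<in>A. ennreal (1 / real (card A)) * g a)"
    unfolding uniform_count_measure_def using assms by (rule nn_integral_point_measure_finite)
  ultimately show ?thesis
    by (simp add: divide_ennreal_def sum_distrib_right mult.commute)
qed (simp add: uniform_count_measure_def nn_integral_point_measure_finite)

lemma emp_sets[simp, measurable_cong]: "sets (emp N x) = sets borel"
  by (simp add: emp_def)

lemma emp_meas: "x \<in> measurable (uniform_count_measure {1..N}) M \<longleftrightarrow> x \<in> {1..N} \<rightarrow> space M"
  by (simp add: measurable_cong_sets[OF sets_uniform_count_measure_count_space refl])

lemma emp_prob: "N \<ge> 1 \<Longrightarrow> prob_space (emp N x)"
  unfolding emp_def
  by (rule prob_space.prob_space_distr) (auto intro!: prob_space_uniform_count_measure simp: emp_meas)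

lemma nn_integral_emp:
  assumes "g \<in> borel_measurable borel"
  shows "(\<integral>\<^sup>+z. g z \<partial>emp N x) = (\<Sum>i\<in>{1..N}. g (x i)) / of_nat N"
  unfolding emp_def
  by (subst nn_integral_distr) (auto simp: emp_meas assms nn_integral_ucm)

lemma emeasure_emp:
  assumes "B \<in> sets borel"
  shows "emeasure (emp N x) B = (\<Sum>i\<in>{1..N}. indicator B (x i)) / of_nat N"
proof -
  have "emeasure (emp N x) B = (\<integral>\<^sup>+z. indicator B z \<partial>emp N x)"
    using assms by simp
  also have "\<dots> = (\<Sum>i\<in>{1..N}. indicator B (x i)) / of_nat N" using assms by (subst nn_integral_emp) auto
  finally show ?thesis .
qed

lemma emp_P1: "N \<ge> 1 \<Longrightarrow> emp N x \<in> P1"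
  unfolding P1_def
  by (auto simp: emp_prob nn_integral_emp ennreal_of_nat_eq_real_of_nat divide_ennreal sum_nonneg)

lemma ennreal_cancel:
  assumes "c > 0" "N > 0"
  shows "ennreal (real N / real c) * (of_nat c / of_nat N) = 1"
  using assms by (simp add: ennreal_of_nat_eq_real_of_nat divide_ennreal ennreal_mult[symmetric])

lemma ennreal_cancel_t:
  assumes "c > 0" "N > 0"
  shows "ennreal (real N / real c) * (t * (of_nat c / of_nat N)) = t"
  using ennreal_cancel[OF assms] by (metis mult.left_commute mult_1_right)

lemma regroup:
  fixes y :: "nat \<Rightarrow> 'a" and F :: "'a \<Rightarrow> ennreal"
  assumes N: "N \<ge> 1"
  shows "(\<Sum>j\<in>{1..N}. ennreal (real N / real (card {i\<in>{1..N}. y i = y j})) * F (y j)) / of_nat N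
     = (\<Sum>a\<in>y ` {1..N}. F a)"
proof -
  let ?c = "\<lambda>a. card {i\<in>{1..N}. y i = a}"
  have "(\<Sum>j\<in>{1..N}. ennreal (real N / real (?c (y j))) * F (y j))
     = (\<Sum>a\<in>y ` {1..N}. \<Sum>j\<in>{i\<in>{1..N}. y i = a}. ennreal (real N / real (?c (y j))) * F (y j))"
    by (rule sum.image_gen) simp
  also have "\<dots> = (\<Sum>a\<in>y ` {1..N}. of_nat (?c a) * (ennreal (real N / real (?c a)) * F a))"
    by (intro sum.cong refl) (simp)
  also have "\<dots> = (\<Sum>a\<in>y ` {1..N}. of_nat N * F a)"
  proof (intro sum.cong refl)
    fix a assume "a \<in> y ` {1..N}"
    then have "?c a > 0" by (auto simp: card_gt_0_iff)
    then have ne: "real (?c a) \<noteq> 0" by (simp only: of_nat_0_less_iff[symmetric])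
    have e: "real (?c a) * (real N / real (?c a)) = real N"
      using ne by (metis times_divide_eq_right nonzero_mult_div_cancel_left)
    have "of_nat (?c a) * ennreal (real N / real (?c a)) = (of_nat N :: ennreal)"
      by (metis e ennreal_mult ennreal_of_nat_eq_real_of_nat of_nat_0_le_iff divide_nonneg_nonneg)
    then show "of_nat (?c a) * (ennreal (real N / real (?c a)) * F a) = of_nat N * F a"
      by (simp add: mult.assoc[symmetric])
  qed
  also have "\<dots> = of_nat N * (\<Sum>a\<in>y ` {1..N}. F a)" by (simp add: sum_distrib_left)
  finally have eq: "(\<Sum>j\<in>{1..N}. ennreal (real N / real (?c (y j))) * F (y j))
     = (\<Sum>a\<in>y ` {1..N}. F a) * of_nat N" by (simp add: mult.commute)
  have "of_nat N \<noteq> (0::ennreal)" using N by simp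
  then show ?thesis unfolding eq
    by (intro ennreal_mult_divide_eq) simp_all
qed

lemma INF_const_add_ennreal:
  fixes g :: "'b \<Rightarrow> ennreal"
  shows "(INF i\<in>C. c + g i) = c + (INF i\<in>C. g i)"
proof (cases "C = {}")
  case False
  have "c + Inf (g ` C) = Inf ((\<lambda>x. c + x) ` (g ` C))"
    using continuous_at_Inf_mono[of "\<lambda>x. c + x" "g ` C"]
    using continuous_add[of "at_right (Inf (g ` C))" "\<lambda>x. c" "\<lambda>x. x"] False
    by (auto simp: mono_def)
  then show ?thesis by (simp add: image_comp)
qed simp

lemma fst_borel[measurable]: "fst \<in> borel_measurable (borel :: ('a::euclidean_space \<times> 'b::euclidean_space) measure)"
  using measurable_fst[of "borel::'a measure" "borel::'b measure"] by (simp add: borel_prod)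

lemma snd_borel[measurable]: "snd \<in> borel_measurable (borel :: ('a::euclidean_space \<times> 'b::euclidean_space) measure)"
  using measurable_snd[of "borel::'a measure" "borel::'b measure"] by (simp add: borel_prod)

lemma pred_fst_eq[measurable]: "Measurable.pred borel (\<lambda>p::('a::euclidean_space \<times> 'a). fst p = a)"
proof -
  have "closed {p::('a \<times> 'a). fst p = a}"
    by (rule closed_Collect_eq) (auto intro: continuous_intros)
  then show ?thesis unfolding pred_def by (simp add: borel_closed)
qed

lemma glue_coupling:
  fixes x y :: "nat \<Rightarrow> 'a::euclidean_space" and \<nu> :: "'a measure"
  assumes N: "N \<ge> 1" and pi: "\<pi> \<in> couplings (emp N y) \<nu>"
  shows "W1 (emp N x) \<nu> \<le> (\<Sum>i\<in>{1..N}. ennreal (dist (x i) (y i))) / of_nat N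
           + (\<integral>\<^sup>+ p. ennreal (dist (fst p) (snd p)) \<partial>\<pi>)"
proof -
  define I where "I = {1..N}"
  define c where "c a = card {i\<in>{1..N}. y i = a}" for a
  define w where "w j p = (if fst p = y j then ennreal (real N / real (c (y j))) else 0)"
    for j and p :: "'a \<times> 'a"
  define K where "K j = distr (density \<pi> (w j)) borel (\<lambda>p. (x j, snd p))" for j
  define \<pi>' where "\<pi>' = uniform_count_measure I \<bind> K"
  have pi': "sets \<pi> = sets (borel \<Otimes>\<^sub>M borel) \<and> prob_space \<pi> \<and> distr \<pi> borel fst = emp N y
     \<and> distr \<pi> borel snd = \<nu>" using pi unfolding couplings_def by blast
  then have sp[measurable_cong]: "sets \<pi> = sets (borel :: ('a\<times>'a) measure)"
    and ps: "prob_space \<pi>" and m1: "distr \<pi> borel fst = emp N y" and m2: "distr \<pi> borel snd = \<nu>"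
    by (simp_all only: borel_prod)
  interpret P: prob_space \<pi> by fact
  have spc: "space \<pi> = UNIV" using sets_eq_imp_space_eq[OF sp] by simp
  have fstm[measurable]: "fst \<in> borel_measurable \<pi>" "snd \<in> borel_measurable \<pi>"
    using measurable_fst[of "borel::'a measure" "borel::'a measure"]
      measurable_snd[of "borel::'a measure" "borel::'a measure"]
    by (simp_all add: measurable_cong_sets[OF sp refl] borel_prod)
  have wm[measurable]: "w j \<in> borel_measurable \<pi>" for j
    unfolding w_def by measurable
  have F1: "emeasure \<pi> {p\<in>space \<pi>. fst p \<in> S} = emeasure (emp N y) S" if S: "S \<in> sets borel" for S
  proof -
    have "emeasure (distr \<pi> borel fst) S = emeasure \<pi> (fst -` S \<inter> space \<pi>)"
      by (rule emeasure_distr) (auto simp: S)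
    then show ?thesis using m1 by (simp add: vimage_def Int_def conj_commute)
  qed
  have fS: "{p\<in>space \<pi>. fst p \<in> S} \<in> sets \<pi>" if "S \<in> sets borel" for S
    using measurable_sets[OF fstm(1) that] by (simp add: vimage_def Int_def conj_commute)
  have cpos: "c (y j) > 0" if "j \<in> I" for j
    using that by (auto simp: c_def I_def card_gt_0_iff)
  have AEY: "AE p in \<pi>. fst p \<in> y ` I"
  proof (rule AE_I')
    have cl: "- (y ` I) \<in> sets borel"
      by (intro borel_open) (auto intro!: finite_imp_closed simp: I_def open_Compl)
    have "emeasure \<pi> {p\<in>space \<pi>. fst p \<in> - (y ` I)} = 0"
    proof -
      have "emeasure (emp N y) (-(y ` I)) = 0"
        unfolding emeasure_emp[OF cl] by (simp add: I_def)
      then show ?thesis using F1[OF cl] by simp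
    qed
    then show "{p\<in>space \<pi>. fst p \<in> - (y ` I)} \<in> null_sets \<pi>"
      using fS[OF cl] by (auto intro!: null_setsI)
  qed auto
  have phi_const: "(\<integral>\<^sup>+ p. (if fst p = a then t else 0) \<partial>\<pi>) = t * (of_nat (c a) / of_nat N)" for a t
  proof -
    have sing: "{a} \<in> sets borel" by (intro borel_closed) simp
    have sa: "{p\<in>space \<pi>. fst p \<in> {a}} \<in> sets \<pi>" by (rule fS[OF sing])
    have "(\<integral>\<^sup>+ p. (if fst p = a then t else 0) \<partial>\<pi>) = (\<integral>\<^sup>+ p. t * indicator {p\<in>space \<pi>. fst p \<in> {a}} p \<partial>\<pi>)"
      by (intro nn_integral_cong) (auto simp: spc)
    also have "\<dots> = t * emeasure \<pi> {p\<in>space \<pi>. fst p \<in> {a}}"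
      using sa by (rule nn_integral_cmult_indicator)
    also have "\<dots> = t * ((\<Sum>i\<in>{1..N}. indicator {a} (y i)) / of_nat N)"
      using F1[OF sing] emeasure_emp[OF sing] by (simp only:)
    also have "(\<Sum>i\<in>{1..N}. indicator {a} (y i) :: ennreal) = (\<Sum>i\<in>{1..N}. indicator {i. y i = a} i)"
      by (intro sum.cong) (auto split: split_indicator)
    also have "\<dots> = of_nat (c a)"
    proof -
      have "(\<Sum>i\<in>{1..N::nat}. indicator {i. y i = a} i :: ennreal) = of_nat (\<Sum>i\<in>{1..N::nat}. indicator {i. y i = a} i)"
        by (simp add: of_nat_sum indicator_def)
      also have "(\<Sum>i\<in>{1..N::nat}. indicator {i. y i = a} i :: nat) = card ({1..N} \<inter> {i. y i = a})"
        by (rule sum_indicator_eq_card) simp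
      also have "{1..N} \<inter> {i. y i = a} = {i\<in>{1..N}. y i = a}" by auto
      finally show ?thesis by (simp add: c_def)
    qed
    finally show ?thesis .
  qed
  have phi_sum: "(\<Sum>a\<in>y ` I. \<integral>\<^sup>+ p. (if fst p = a then G p else 0) \<partial>\<pi>) = (\<integral>\<^sup>+ p. G p \<partial>\<pi>)"
    if G[measurable]: "G \<in> borel_measurable \<pi>" for G
  proof -
    have "(\<Sum>a\<in>y ` I. \<integral>\<^sup>+ p. (if fst p = a then G p else 0) \<partial>\<pi>)
        = (\<integral>\<^sup>+ p. (\<Sum>a\<in>y ` I. (if fst p = a then G p else 0)) \<partial>\<pi>)"
      by (rule nn_integral_sum[symmetric]) measurable
    also have "\<dots> = (\<integral>\<^sup>+ p. G p \<partial>\<pi>)"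
      using AEY by (intro nn_integral_cong_AE) (auto simp: I_def)
    finally show ?thesis .
  qed
  have Kint: "(\<integral>\<^sup>+ q. h q \<partial>K j) = ennreal (real N / real (c (y j))) *
        (\<integral>\<^sup>+ p. (if fst p = y j then h (x j, snd p) else 0) \<partial>\<pi>)"
    if h[measurable]: "h \<in> borel_measurable borel" for h j
  proof -
    have "(\<integral>\<^sup>+ q. h q \<partial>K j) = (\<integral>\<^sup>+ p. w j p * h (x j, snd p) \<partial>\<pi>)"
      unfolding K_def by (subst nn_integral_distr) (auto simp: nn_integral_density)
    also have "\<dots> = (\<integral>\<^sup>+ p. ennreal (real N / real (c (y j))) * (if fst p = y j then h (x j, snd p) else 0) \<partial>\<pi>)"
      by (intro nn_integral_cong) (simp add: w_def)
    also have "\<dots> = ennreal (real N / real (c (y j))) *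
        (\<integral>\<^sup>+ p. (if fst p = y j then h (x j, snd p) else 0) \<partial>\<pi>)"
      by (rule nn_integral_cmult) measurable
    finally show ?thesis .
  qed
  have sK: "sets (K j) = sets borel" for j by (simp add: K_def)
  have Kprob: "prob_space (K j)" if j: "j \<in> I" for j
  proof
    have "emeasure (K j) (space (K j)) = (\<integral>\<^sup>+ q. 1 \<partial>K j)" by simp
    also have "\<dots> = ennreal (real N / real (c (y j))) * (1 * (of_nat (c (y j)) / of_nat N))"
      by (subst Kint) (simp_all add: phi_const)
    also have "\<dots> = 1" using ennreal_cancel[OF cpos[OF j]] N by simp
    finally show "emeasure (K j) (space (K j)) = 1" .
  qed
  have Km: "K \<in> uniform_count_measure I \<rightarrow>\<^sub>M prob_algebra borel"
    by (simp add: measurable_cong_sets[OF sets_uniform_count_measure_count_space refl]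
        space_prob_algebra sK Kprob)
  have ucm: "uniform_count_measure I \<in> space (prob_algebra (uniform_count_measure I))"
    using N by (auto simp: space_prob_algebra I_def intro!: prob_space_uniform_count_measure)
  have p'prob: "prob_space \<pi>'" unfolding \<pi>'_def by (rule prob_space_bind'[OF ucm Km])
  have p'sets[measurable_cong]: "sets \<pi>' = sets borel" unfolding \<pi>'_def by (rule sets_bind'[OF ucm Km])
  have p'int: "(\<integral>\<^sup>+ q. h q \<partial>\<pi>') = (\<Sum>j\<in>I. \<integral>\<^sup>+ q. h q \<partial>K j) / of_nat N"
    if h[measurable]: "h \<in> borel_measurable borel" for h
    unfolding \<pi>'_def
    by (subst nn_integral_bind[OF h measurable_prob_algebraD[OF Km]])
       (simp add: nn_integral_ucm I_def)
  have p'm[measurable]: "fst \<in> borel_measurable \<pi>'" "snd \<in> borel_measurable \<pi>'"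
    using measurable_fst[of "borel::'a measure" "borel::'a measure"]
      measurable_snd[of "borel::'a measure" "borel::'a measure"]
    by (simp_all add: measurable_cong_sets[OF p'sets refl] borel_prod)
  have Npos: "N > 0" using N by simp
  have marg1: "distr \<pi>' borel fst = emp N x"
  proof (rule measure_eqI)
    fix B assume "B \<in> sets (distr \<pi>' borel fst)"
    then have B[measurable]: "B \<in> sets borel" by simp
    have "emeasure (distr \<pi>' borel fst) B = (\<integral>\<^sup>+ z. indicator B z \<partial>distr \<pi>' borel fst)"
      by simp
    also have "\<dots> = (\<integral>\<^sup>+ q. indicator B (fst q) \<partial>\<pi>')"
      by (rule nn_integral_distr) measurable
    also have "\<dots> = (\<Sum>j\<in>I. \<integral>\<^sup>+ q. indicator B (fst q) \<partial>K j) / of_nat N"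
      by (rule p'int) measurable
    also have "(\<Sum>j\<in>I. \<integral>\<^sup>+ q. indicator B (fst q) \<partial>K j) = (\<Sum>j\<in>I. indicator B (x j))"
    proof (intro sum.cong refl)
      fix j assume j: "j \<in> I"
      have "(\<integral>\<^sup>+ q. indicator B (fst q) \<partial>K j) = ennreal (real N / real (c (y j))) *
        (\<integral>\<^sup>+ p. (if fst p = y j then indicator B (x j) else 0) \<partial>\<pi>)"
        using Kint[of "\<lambda>q. indicator B (fst q)" j] by (simp only: fst_conv) (simp add: measurable_compose[OF measurable_fst B[THEN borel_measurable_indicator]] borel_prod[symmetric])
      also have "\<dots> = indicator B (x j)"
        by (simp only: phi_const ennreal_cancel_t[OF cpos[OF j] Npos])
      finally show "(\<integral>\<^sup>+ q. indicator B (fst q) \<partial>K j) = indicator B (x j)" .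
    qed
    also have "(\<Sum>j\<in>I. indicator B (x j)) / of_nat N = emeasure (emp N x) B"
      by (simp add: emeasure_emp[OF B] I_def)
    finally show "emeasure (distr \<pi>' borel fst) B = emeasure (emp N x) B" .
  qed simp
  have marg2: "distr \<pi>' borel snd = \<nu>"
  proof (rule measure_eqI)
    show "sets (distr \<pi>' borel snd) = sets \<nu>" using m2 by (metis sets_distr)
    fix B assume "B \<in> sets (distr \<pi>' borel snd)"
    then have B[measurable]: "B \<in> sets borel" by simp
    have "emeasure (distr \<pi>' borel snd) B = (\<integral>\<^sup>+ z. indicator B z \<partial>distr \<pi>' borel snd)"
      by simp
    also have "\<dots> = (\<integral>\<^sup>+ q. indicator B (snd q) \<partial>\<pi>')"
      by (rule nn_integral_distr) measurable
    also have "\<dots> = (\<Sum>j\<in>I. \<integral>\<^sup>+ q. indicator B (snd q) \<partial>K j) / of_nat N"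
      by (rule p'int) measurable
    also have "(\<Sum>j\<in>I. \<integral>\<^sup>+ q. indicator B (snd q) \<partial>K j) = (\<Sum>j\<in>I.
        ennreal (real N / real (c (y j))) * (\<integral>\<^sup>+ p. (if fst p = y j then indicator B (snd p) else 0) \<partial>\<pi>))"
    proof (intro sum.cong refl)
      fix j
      have mB: "(\<lambda>q. indicator B (snd q)) \<in> borel_measurable (borel :: ('a \<times> 'a) measure)" by measurable
      show "(\<integral>\<^sup>+ q. indicator B (snd q) \<partial>K j) =
        ennreal (real N / real (c (y j))) * (\<integral>\<^sup>+ p. (if fst p = y j then indicator B (snd p) else 0) \<partial>\<pi>)"
        by (simp only: Kint[OF mB] snd_conv)
    qed
    also have "\<dots> / of_nat N = (\<Sum>a\<in>y ` I. \<integral>\<^sup>+ p. (if fst p = a then indicator B (snd p) else 0) \<partial>\<pi>)"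
      unfolding I_def c_def by (rule regroup[OF N])
    also have "\<dots> = (\<integral>\<^sup>+ p. indicator B (snd p) \<partial>\<pi>)"
      by (rule phi_sum) measurable
    also have "\<dots> = (\<integral>\<^sup>+ z. indicator B z \<partial>distr \<pi> borel snd)"
      by (rule nn_integral_distr[symmetric]) measurable
    also have "\<dots> = emeasure (distr \<pi> borel snd) B" using B by simp
    also have "\<dots> = emeasure \<nu> B" using m2 by simp
    finally show "emeasure (distr \<pi>' borel snd) B = emeasure \<nu> B" .
  qed
  have cpl: "\<pi>' \<in> couplings (emp N x) \<nu>"
    unfolding couplings_def borel_prod using p'prob p'sets marg1 marg2 by simp
  have "(\<integral>\<^sup>+ q. ennreal (dist (fst q) (snd q)) \<partial>\<pi>') = (\<Sum>j\<in>I. \<integral>\<^sup>+ q. ennreal (dist (fst q) (snd q)) \<partial>K j) / of_nat N"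
    by (rule p'int) measurable
  also have "(\<Sum>j\<in>I. \<integral>\<^sup>+ q. ennreal (dist (fst q) (snd q)) \<partial>K j) \<le> (\<Sum>j\<in>I. ennreal (dist (x j) (y j))
      + ennreal (real N / real (c (y j))) * (\<integral>\<^sup>+ p. (if fst p = y j then ennreal (dist (fst p) (snd p)) else 0) \<partial>\<pi>))"
  proof (intro sum_mono)
    fix j assume j: "j \<in> I"
    have "(\<integral>\<^sup>+ q. ennreal (dist (fst q) (snd q)) \<partial>K j) = ennreal (real N / real (c (y j))) *
        (\<integral>\<^sup>+ p. (if fst p = y j then ennreal (dist (x j) (snd p)) else 0) \<partial>\<pi>)"
    proof -
      have md: "(\<lambda>q. ennreal (dist (fst q) (snd q))) \<in> borel_measurable (borel :: ('a \<times> 'a) measure)" by measurable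
      show ?thesis by (simp only: Kint[OF md] snd_conv fst_conv)
    qed
    also have "(\<integral>\<^sup>+ p. (if fst p = y j then ennreal (dist (x j) (snd p)) else 0) \<partial>\<pi>) \<le>
        (\<integral>\<^sup>+ p. (if fst p = y j then ennreal (dist (x j) (y j)) else 0) + (if fst p = y j then ennreal (dist (fst p) (snd p)) else 0) \<partial>\<pi>)"
      by (intro nn_integral_mono) (auto simp: ennreal_plus[symmetric] dist_triangle simp del: ennreal_plus)
    also have "\<dots> = (\<integral>\<^sup>+ p. (if fst p = y j then ennreal (dist (x j) (y j)) else 0) \<partial>\<pi>) +
         (\<integral>\<^sup>+ p. (if fst p = y j then ennreal (dist (fst p) (snd p)) else 0) \<partial>\<pi>)"
      by (rule nn_integral_add) measurable
    finally show "(\<integral>\<^sup>+ q. ennreal (dist (fst q) (snd q)) \<partial>K j) \<le> ennreal (dist (x j) (y j))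
      + ennreal (real N / real (c (y j))) * (\<integral>\<^sup>+ p. (if fst p = y j then ennreal (dist (fst p) (snd p)) else 0) \<partial>\<pi>)"
      by (simp add: mult_left_mono distrib_left phi_const ennreal_cancel_t[OF cpos[OF j] Npos])
  qed
  also have "(\<Sum>j\<in>I. ennreal (dist (x j) (y j))
      + ennreal (real N / real (c (y j))) * (\<integral>\<^sup>+ p. (if fst p = y j then ennreal (dist (fst p) (snd p)) else 0) \<partial>\<pi>)) / of_nat N
     = (\<Sum>j\<in>I. ennreal (dist (x j) (y j))) / of_nat N + (\<Sum>j\<in>I.
       ennreal (real N / real (c (y j))) * (\<integral>\<^sup>+ p. (if fst p = y j then ennreal (dist (fst p) (snd p)) else 0) \<partial>\<pi>)) / of_nat N"
    by (simp add: sum.distrib add_divide_distrib_ennreal)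
  also have "(\<Sum>j\<in>I. ennreal (real N / real (c (y j))) * (\<integral>\<^sup>+ p. (if fst p = y j then ennreal (dist (fst p) (snd p)) else 0) \<partial>\<pi>)) / of_nat N
     = (\<Sum>a\<in>y ` I. \<integral>\<^sup>+ p. (if fst p = a then ennreal (dist (fst p) (snd p)) else 0) \<partial>\<pi>)"
    unfolding I_def c_def by (rule regroup[OF N])
  also have "\<dots> = (\<integral>\<^sup>+ p. ennreal (dist (fst p) (snd p)) \<partial>\<pi>)"
    by (rule phi_sum) measurable
  finally have cost: "(\<integral>\<^sup>+ q. ennreal (dist (fst q) (snd q)) \<partial>\<pi>') \<le>
     (\<Sum>j\<in>I. ennreal (dist (x j) (y j))) / of_nat N + (\<integral>\<^sup>+ p. ennreal (dist (fst p) (snd p)) \<partial>\<pi>)"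
    by (simp add: divide_right_mono_ennreal)
  have "W1 (emp N x) \<nu> \<le> (\<integral>\<^sup>+ q. ennreal (dist (fst q) (snd q)) \<partial>\<pi>')"
    unfolding W1_def using cpl by (rule INF_lower)
  with cost show ?thesis by (simp add: I_def)
qed

lemma glue:
  fixes x y :: "nat \<Rightarrow> 'a::euclidean_space" and \<nu> :: "'a measure"
  assumes N: "N \<ge> 1"
  shows "W1 (emp N x) \<nu> \<le> (\<Sum>i\<in>{1..N}. ennreal (dist (x i) (y i))) / of_nat N + W1 (emp N y) \<nu>"
proof -
  have "W1 (emp N x) \<nu> \<le> (INF \<pi>\<in>couplings (emp N y) \<nu>. (\<Sum>i\<in>{1..N}. ennreal (dist (x i) (y i))) / of_nat N
           + (\<integral>\<^sup>+ p. ennreal (dist (fst p) (snd p)) \<partial>\<pi>))"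
    by (rule INF_greatest) (rule glue_coupling[OF N])
  also have "\<dots> = (\<Sum>i\<in>{1..N}. ennreal (dist (x i) (y i))) / of_nat N + W1 (emp N y) \<nu>"
    unfolding W1_def by (rule INF_const_add_ennreal)
  finally show ?thesis .
qed



lemma lip:
  fixes f :: "'a::euclidean_space \<Rightarrow> 'a measure \<Rightarrow> 'z \<Rightarrow> 'a"
  assumes D: "Dlip f z \<le> ennreal M" and M: "M > 0" and m1: "\<mu>1 \<in> P1" and m2: "\<mu>2 \<in> P1"
  shows "ennreal (dist (f x1 \<mu>1 z) (f x2 \<mu>2 z)) \<le> ennreal M * (ennreal (dist x1 x2) + W1 \<mu>1 \<mu>2)"
proof (cases "(x1, \<mu>1) = (x2, \<mu>2)")
  case True then show ?thesis by simp
next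
  case False
  define a where "a = ennreal (dist (f x1 \<mu>1 z) (f x2 \<mu>2 z))"
  define b where "b = ennreal (dist x1 x2) + W1 \<mu>1 \<mu>2"
  have "a / b \<le> Dlip f z"
    unfolding Dlip_def a_def b_def
    by (rule SUP_upper2[of "(x1, \<mu>1, x2, \<mu>2)"]) (use False m1 m2 in auto)
  with D have r: "a / b \<le> ennreal M" by order
  have "a \<le> ennreal M * b"
  proof (cases "b = 0")
    case True
    then have ab: "a / b = a * top" by (simp add: divide_ennreal_def)
    have "a = 0"
    proof (rule ccontr)
      assume "a \<noteq> 0"
      then have "a / b = top" using ab by (simp add: ennreal_mult_top)
      with r show False by (metis ennreal_neq_top top_unique)
    qed
    then show ?thesis by simp
  next
    case b0: False
    show ?thesis
    proof (cases "b = top")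
      case True then show ?thesis using M by (simp add: ennreal_mult_top)
    next
      case False
      have "a = (a / b) * b" using b0 False by (simp add: ennreal_divide_times top.not_eq_extremum)
      also have "\<dots> \<le> ennreal M * b" by (rule mult_right_mono[OF r]) simp
      finally show ?thesis .
    qed
  qed
  then show ?thesis by (simp add: a_def b_def)
qed

lemma Pair0_borel[measurable]: "(\<lambda>x::'a::euclidean_space. (x, 0::'a)) \<in> borel_measurable borel"
  by (intro borel_measurable_continuous_onI continuous_intros)

lemma mvmult_borel[measurable]: "(\<lambda>x. (A::real^'n^'m) *v x) \<in> borel_measurable borel"
  by (intro borel_measurable_continuous_onI linear_continuous_on matrix_vector_mul_bounded_linear)

lemma W1_return0:
  fixes \<mu> :: "'a::euclidean_space measure"
  assumes "\<mu> \<in> P1" shows "W1 \<mu> (return borel 0) \<le> (\<integral>\<^sup>+ x. ennreal (norm x) \<partial>\<mu>)"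
proof -
  from assms have sm[measurable_cong]: "sets \<mu> = sets borel" and pm: "prob_space \<mu>" by (auto simp: P1_def)
  interpret prob_space \<mu> by fact
  define \<pi> where "\<pi> = distr \<mu> borel (\<lambda>x. (x, 0::'a))"
  have m: "(\<lambda>x. (x, 0::'a)) \<in> \<mu> \<rightarrow>\<^sub>M borel" by measurable
  have "\<pi> \<in> couplings \<mu> (return borel 0)"
    unfolding couplings_def borel_prod
  proof (intro CollectI conjI)
    show "sets \<pi> = sets borel" by (simp add: \<pi>_def)
    show "prob_space \<pi>" unfolding \<pi>_def by (rule prob_space_distr[OF m])
    have "distr \<pi> borel fst = distr \<mu> borel (\<lambda>x. x)"
      unfolding \<pi>_def by (subst distr_distr) (auto simp: comp_def m)
    also have "\<dots> = \<mu>" by (rule distr_id2) (simp add: sm)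
    finally show "distr \<pi> borel fst = \<mu>" .
    have "distr \<pi> borel snd = distr \<mu> borel (\<lambda>x. 0)"
      unfolding \<pi>_def by (subst distr_distr) (auto simp: comp_def m)
    also have "\<dots> = return borel 0" by (rule distr_const) simp
    finally show "distr \<pi> borel snd = return borel 0" .
  qed
  then have "W1 \<mu> (return borel 0) \<le> (\<integral>\<^sup>+ p. ennreal (dist (fst p) (snd p)) \<partial>\<pi>)"
    unfolding W1_def by (rule INF_lower)
  also have "\<dots> = (\<integral>\<^sup>+ x. ennreal (norm x) \<partial>\<mu>)"
    unfolding \<pi>_def by (subst nn_integral_distr) (auto simp: m dist_norm)
  finally show ?thesis .
qed

lemma return0_P1: "return borel (0::'a::euclidean_space) \<in> P1"
  unfolding P1_def by (auto simp: prob_space_return nn_integral_return)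

lemma D1_meas:
  fixes f :: "'a::euclidean_space \<Rightarrow> 'a measure \<Rightarrow> 'b::euclidean_space \<Rightarrow> 'a"
  assumes f_meas: "(\<lambda>(x, z). f x (return borel 0) z) \<in> borel_measurable (borel \<Otimes>\<^sub>M borel)"
    and th: "sets \<theta> = sets borel"
  shows "(\<lambda>z. D1 f z) \<in> borel_measurable \<theta>"
proof -
  have "(\<lambda>z. (0::'a, z)) \<in> \<theta> \<rightarrow>\<^sub>M borel \<Otimes>\<^sub>M borel"
    by (simp add: measurable_cong_sets[OF th refl])
  from measurable_compose[OF this f_meas] show ?thesis
    unfolding D1_def by simp
qed

lemma D1_int:
  fixes f :: "'a::euclidean_space \<Rightarrow> 'a measure \<Rightarrow> 'b::euclidean_space \<Rightarrow> 'a"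
  assumes m: "(\<lambda>z. D1 f z) \<in> borel_measurable \<theta>" and \<alpha>: "\<alpha> > 0"
    and e: "(\<integral>\<^sup>+ z. ennreal (exp (\<alpha> * D1 f z)) \<partial>\<theta>) < \<infinity>"
  shows "(\<integral>\<^sup>+ z. ennreal (D1 f z) \<partial>\<theta>) < \<infinity>"
proof -
  have "(\<integral>\<^sup>+ z. ennreal (D1 f z) \<partial>\<theta>) \<le> (\<integral>\<^sup>+ z. ennreal (1/\<alpha>) * ennreal (exp (\<alpha> * D1 f z)) \<partial>\<theta>)"
  proof (intro nn_integral_mono)
    fix z
    have "\<alpha> * D1 f z \<le> exp (\<alpha> * D1 f z)" using exp_ge_add_one_self[of "\<alpha> * D1 f z"] by linarith
    then have "D1 f z \<le> 1/\<alpha> * exp (\<alpha> * D1 f z)" using \<alpha> by (simp add: field_simps)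
    then show "ennreal (D1 f z) \<le> ennreal (1/\<alpha>) * ennreal (exp (\<alpha> * D1 f z))"
      using \<alpha> by (simp add: ennreal_mult[symmetric] ennreal_leI)
  qed
  also have "\<dots> = ennreal (1/\<alpha>) * (\<integral>\<^sup>+ z. ennreal (exp (\<alpha> * D1 f z)) \<partial>\<theta>)"
    by (rule nn_integral_cmult) (use m in measurable)
  also have "\<dots> < \<infinity>" using e by (simp add: ennreal_mult_less_top)
  finally show ?thesis .
qed

lemma Psi_P1:
  fixes A :: "real^'d^'d" and f :: "real^'d \<Rightarrow> (real^'d) measure \<Rightarrow> real^'m \<Rightarrow> real^'d"
    and \<theta> :: "(real^'m) measure"
  assumes mu: "\<mu> \<in> P1" and theta: "prob_space \<theta>" "sets \<theta> = sets borel"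
    and f_meas: "\<And>\<mu>. \<mu> \<in> P1 \<Longrightarrow> (\<lambda>(x, z). f x \<mu> z) \<in> borel_measurable (borel \<Otimes>\<^sub>M borel)"
    and M: "M > 0" and D: "AE z in \<theta>. Dlip f z \<le> ennreal M"
    and D1i: "(\<integral>\<^sup>+ z. ennreal (D1 f z) \<partial>\<theta>) < \<infinity>"
    and delta: "\<delta> \<ge> 0"
  shows "Psi A \<delta> f \<theta> \<mu> \<in> P1"
proof -
  from mu have sm[measurable_cong]: "sets \<mu> = sets borel" and pm: "prob_space \<mu>"
    and fm: "(\<integral>\<^sup>+ x. ennreal (norm x) \<partial>\<mu>) < \<infinity>" by (auto simp: P1_def)
  interpret mu: prob_space \<mu> by fact
  interpret th: prob_space \<theta> by fact
  interpret pair_prob_space \<mu> \<theta> ..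
  have st[measurable_cong]: "sets \<theta> = sets borel" by fact
  have sp: "sets (\<mu> \<Otimes>\<^sub>M \<theta>) = sets (borel \<Otimes>\<^sub>M borel)" by (rule sets_pair_measure_cong) (simp_all add: sm st)
  have fmu[measurable]: "(\<lambda>(x, z). f x \<mu> z) \<in> borel_measurable (\<mu> \<Otimes>\<^sub>M \<theta>)"
    using f_meas[OF mu] by (simp add: measurable_cong_sets[OF sp refl])
  define g where "g = (\<lambda>(x, z). A *v x + \<delta> *\<^sub>R f x \<mu> z)"
  have gm[measurable]: "g \<in> borel_measurable (\<mu> \<Otimes>\<^sub>M \<theta>)"
  proof -
    have "(\<lambda>p. A *v fst p + \<delta> *\<^sub>R (\<lambda>(x, z). f x \<mu> z) p) \<in> borel_measurable (\<mu> \<Otimes>\<^sub>M \<theta>)"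
      by measurable
    then show ?thesis unfolding g_def by (simp add: case_prod_beta)
  qed
  have prob: "prob_space (Psi A \<delta> f \<theta> \<mu>)"
    unfolding Psi_def g_def[symmetric] by (rule prob_space.prob_space_distr[OF prob_space_pair[OF pm theta(1)] gm])
  have D1m[measurable]: "(\<lambda>z. D1 f z) \<in> borel_measurable \<theta>"
    by (rule D1_meas[of f, OF f_meas[OF return0_P1] theta(2)])
  have AEp: "AE p in \<mu> \<Otimes>\<^sub>M \<theta>. Dlip f (snd p) \<le> ennreal M"
  proof -
    from D obtain Nz where Nz: "{z\<in>space \<theta>. \<not> Dlip f z \<le> ennreal M} \<subseteq> Nz" "emeasure \<theta> Nz = 0" "Nz \<in> sets \<theta>"
      by (rule AE_E)
    show ?thesis
    proof (rule AE_I')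
      show "space \<mu> \<times> Nz \<in> null_sets (\<mu> \<Otimes>\<^sub>M \<theta>)"
      proof (intro null_setsI)
        show "emeasure (\<mu> \<Otimes>\<^sub>M \<theta>) (space \<mu> \<times> Nz) = 0"
          using Nz th.emeasure_pair_measure_Times[of "space \<mu>" \<mu> Nz] by simp
        show "space \<mu> \<times> Nz \<in> sets (\<mu> \<Otimes>\<^sub>M \<theta>)" using Nz by auto
      qed
      show "{p \<in> space (\<mu> \<Otimes>\<^sub>M \<theta>). \<not> Dlip f (snd p) \<le> ennreal M} \<subseteq> space \<mu> \<times> Nz"
        using Nz(1) by (auto simp: space_pair_measure)
    qed
  qed
  define W where "W = W1 \<mu> (return borel 0)"
  have Wfin: "W < \<infinity>" using W1_return0[OF mu] fm unfolding W_def by order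
  define C where "C = onorm (\<lambda>x. A *v x)"
  have Cn: "norm (A *v x) \<le> C * norm x" for x
    unfolding C_def by (rule onorm) simp
  have C0: "C \<ge> 0" unfolding C_def by (rule onorm_pos_le) simp
  have bound: "ennreal (norm (g p)) \<le> ennreal C * ennreal (norm (fst p)) + ennreal \<delta> * (ennreal (D1 f (snd p))
      + ennreal M * (ennreal (norm (fst p)) + W))" if Dp: "Dlip f (snd p) \<le> ennreal M" for p
  proof -
    obtain x z where p: "p = (x, z)" by (cases p)
    have "norm (g p) \<le> norm (A *v x) + \<delta> * norm (f x \<mu> z)"
      unfolding g_def p using delta by (auto intro: order_trans[OF norm_triangle_ineq])
    also have "\<dots> \<le> C * norm x + \<delta> * norm (f x \<mu> z)" using Cn[of x] by simp
    finally have "ennreal (norm (g p)) \<le> ennreal (C * norm x) + ennreal \<delta> * ennreal (norm (f x \<mu> z))"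
      using C0 delta by (simp add: ennreal_plus[symmetric] ennreal_mult[symmetric] del: ennreal_plus)
    also have "ennreal (norm (f x \<mu> z)) \<le> ennreal (D1 f z) + ennreal (dist (f x \<mu> z) (f 0 (return borel 0) z))"
      unfolding D1_def
      by (simp add: ennreal_plus[symmetric] del: ennreal_plus) (metis dist_commute dist_norm norm_triangle_sub add.commute)
    also have "ennreal (dist (f x \<mu> z) (f 0 (return borel 0) z)) \<le> ennreal M * (ennreal (dist x 0) + W)"
      unfolding W_def using lip[of f z M \<mu> "return borel 0" x 0] Dp p M mu return0_P1 by simp
    finally show ?thesis using p C0 by (simp add: ennreal_mult mult_left_mono add_mono)
  qed
  have "(\<integral>\<^sup>+ y. ennreal (norm y) \<partial>Psi A \<delta> f \<theta> \<mu>) = (\<integral>\<^sup>+ p. ennreal (norm (g p)) \<partial>(\<mu> \<Otimes>\<^sub>M \<theta>))"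
    unfolding Psi_def g_def[symmetric] by (rule nn_integral_distr) (simp_all add: gm)
  also have "\<dots> \<le> (\<integral>\<^sup>+ p. ennreal C * ennreal (norm (fst p)) + ennreal \<delta> * (ennreal (D1 f (snd p))
      + ennreal M * (ennreal (norm (fst p)) + W)) \<partial>(\<mu> \<Otimes>\<^sub>M \<theta>))"
    using AEp by (intro nn_integral_mono_AE) (auto elim!: eventually_mono intro: bound)
  also have "\<dots> = (\<integral>\<^sup>+ p. ((ennreal C + ennreal \<delta> * ennreal M) * ennreal (norm (fst p))
       + ennreal \<delta> * ennreal (D1 f (snd p))) + ennreal \<delta> * ennreal M * W \<partial>(\<mu> \<Otimes>\<^sub>M \<theta>))"
    by (intro nn_integral_cong) (simp add: algebra_simps)
  also have "\<dots> = (\<integral>\<^sup>+ p. (ennreal C + ennreal \<delta> * ennreal M) * ennreal (norm (fst p))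
       + ennreal \<delta> * ennreal (D1 f (snd p)) \<partial>(\<mu> \<Otimes>\<^sub>M \<theta>)) + (\<integral>\<^sup>+ p. ennreal \<delta> * ennreal M * W \<partial>(\<mu> \<Otimes>\<^sub>M \<theta>))"
    by (rule nn_integral_add) measurable
  also have "(\<integral>\<^sup>+ p. (ennreal C + ennreal \<delta> * ennreal M) * ennreal (norm (fst p))
       + ennreal \<delta> * ennreal (D1 f (snd p)) \<partial>(\<mu> \<Otimes>\<^sub>M \<theta>)) = (\<integral>\<^sup>+ p. (ennreal C + ennreal \<delta> * ennreal M) * ennreal (norm (fst p)) \<partial>(\<mu> \<Otimes>\<^sub>M \<theta>))
       + (\<integral>\<^sup>+ p. ennreal \<delta> * ennreal (D1 f (snd p)) \<partial>(\<mu> \<Otimes>\<^sub>M \<theta>))"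
    by (rule nn_integral_add) measurable
  also have "(\<integral>\<^sup>+ p. (ennreal C + ennreal \<delta> * ennreal M) * ennreal (norm (fst p)) \<partial>(\<mu> \<Otimes>\<^sub>M \<theta>))
     = (ennreal C + ennreal \<delta> * ennreal M) * (\<integral>\<^sup>+ p. ennreal (norm (fst p)) \<partial>(\<mu> \<Otimes>\<^sub>M \<theta>))"
    by (rule nn_integral_cmult) measurable
  also have "(\<integral>\<^sup>+ p. ennreal (norm (fst p)) \<partial>(\<mu> \<Otimes>\<^sub>M \<theta>)) = (\<integral>\<^sup>+ x. ennreal (norm x) \<partial>\<mu>)"
    by (subst th.nn_integral_fst[symmetric]) (auto simp: th.emeasure_space_1)
  also have "(\<integral>\<^sup>+ p. ennreal \<delta> * ennreal (D1 f (snd p)) \<partial>(\<mu> \<Otimes>\<^sub>M \<theta>))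
     = ennreal \<delta> * (\<integral>\<^sup>+ p. ennreal (D1 f (snd p)) \<partial>(\<mu> \<Otimes>\<^sub>M \<theta>))"
    by (rule nn_integral_cmult) measurable
  also have "(\<integral>\<^sup>+ p. ennreal (D1 f (snd p)) \<partial>(\<mu> \<Otimes>\<^sub>M \<theta>)) = (\<integral>\<^sup>+ z. ennreal (D1 f z) \<partial>\<theta>)"
    by (subst th.nn_integral_fst[symmetric]) (auto simp: mu.emeasure_space_1)
  also have "(\<integral>\<^sup>+ p. ennreal \<delta> * ennreal M * W \<partial>(\<mu> \<Otimes>\<^sub>M \<theta>)) = ennreal \<delta> * ennreal M * W"
    by (simp add: prob_space.emeasure_space_1[OF prob_space_pair[OF pm theta(1)]])
  also have "(ennreal C + ennreal \<delta> * ennreal M) * (\<integral>\<^sup>+ x. ennreal (norm x) \<partial>\<mu>) +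
      ennreal \<delta> * (\<integral>\<^sup>+ z. ennreal (D1 f z) \<partial>\<theta>) + ennreal \<delta> * ennreal M * W < \<infinity>"
    using fm D1i Wfin by (simp add: ennreal_mult_less_top)
  finally show ?thesis using prob unfolding P1_def by (simp add: Psi_def)
qed

lemma sum_div_alg:
  fixes d :: "nat \<Rightarrow> ennreal"
  assumes N: "N \<ge> 1"
  shows "(\<Sum>i\<in>{1..N}. p * d i + q * (d i + W)) / of_nat N
     = p * ((\<Sum>i\<in>{1..N}. d i) / of_nat N) + q * ((\<Sum>i\<in>{1..N}. d i) / of_nat N + W)"
proof -
  have nz: "(of_nat N :: ennreal) \<noteq> 0" using N by simp
  have "(\<Sum>i\<in>{1..N}. p * d i + q * (d i + W)) = p * (\<Sum>i\<in>{1..N}. d i) + q * (\<Sum>i\<in>{1..N}. d i) + (q * W) * of_nat N"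
    by (simp add: sum.distrib sum_distrib_left distrib_left algebra_simps)
  then have "(\<Sum>i\<in>{1..N}. p * d i + q * (d i + W)) / of_nat N
      = p * (\<Sum>i\<in>{1..N}. d i) / of_nat N + q * (\<Sum>i\<in>{1..N}. d i) / of_nat N + (q * W) * of_nat N / of_nat N"
    by (simp add: add_divide_distrib_ennreal)
  also have "(q * W) * of_nat N / of_nat N = q * W"
    using nz by (intro ennreal_mult_divide_eq) simp_all
  finally show ?thesis by (simp add: ennreal_times_divide distrib_left)
qed

theorem lemma4p8:
  fixes A :: "real^'d^'d" and \<delta> \<omega> M \<alpha> :: real
    and \<theta> :: "(real^'m) measure" and \<mu>0 :: "(real^'d) measure"
    and f :: "real^'d \<Rightarrow> (real^'d) measure \<Rightarrow> real^'m \<Rightarrow> real^'d"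
    and P :: "'w measure"
    and X0 :: "nat \<Rightarrow> nat \<Rightarrow> 'w \<Rightarrow> real^'d"
    and \<epsilon> :: "nat \<Rightarrow> nat \<Rightarrow> 'w \<Rightarrow> real^'m"
    and n N :: nat
  assumes delta: "\<delta> \<ge> 0"
    and theta: "prob_space \<theta>" "sets \<theta> = sets borel"
    and mu0: "\<mu>0 \<in> P1"
    and f_meas: "\<And>\<mu>. \<mu> \<in> P1 \<Longrightarrow> (\<lambda>(x, z). f x \<mu> z) \<in> borel_measurable (borel \<Otimes>\<^sub>M borel)"
    and P: "prob_space P"
    and X0_meas: "\<And>N' i. N' \<ge> 1 \<Longrightarrow> i \<in> {1..N'} \<Longrightarrow> X0 N' i \<in> borel_measurable P"
    and X0_law: "\<And>N' i. N' \<ge> 1 \<Longrightarrow> i \<in> {1..N'} \<Longrightarrow> distr P borel (X0 N' i) = \<mu>0"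
    and X0_exch: "\<And>N' \<sigma>. N' \<ge> 1 \<Longrightarrow> \<sigma> permutes {1..N'} \<Longrightarrow>
        distr P (PiM {1..N'} (\<lambda>_. borel)) (\<lambda>w. \<lambda>i\<in>{1..N'}. X0 N' (\<sigma> i) w)
      = distr P (PiM {1..N'} (\<lambda>_. borel)) (\<lambda>w. \<lambda>i\<in>{1..N'}. X0 N' i w)"
    and eps_meas: "\<And>i k. i \<ge> 1 \<Longrightarrow> k \<ge> 1 \<Longrightarrow> \<epsilon> i k \<in> borel_measurable P"
    and eps_law: "\<And>i k. i \<ge> 1 \<Longrightarrow> k \<ge> 1 \<Longrightarrow> distr P borel (\<epsilon> i k) = \<theta>"
    and eps_indep: "prob_space.indep_vars P (\<lambda>_. borel) (\<lambda>(i, k). \<epsilon> i k) ({1..} \<times> {1..})"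
    and eps_X0_indep: "prob_space.indep_set P
        {(\<lambda>w. \<lambda>(i, k)\<in>{1..} \<times> {1..}. \<epsilon> i k w) -` B \<inter> space P
          | B. B \<in> sets (PiM ({1..} \<times> {1..}) (\<lambda>_. borel))}
        {(\<lambda>w. \<lambda>(N', i)\<in>(SIGMA N':{1..}. {1..N'}). X0 N' i w) -` B \<inter> space P
          | B. B \<in> sets (PiM (SIGMA N':{1..}. {1..N'}) (\<lambda>_. borel))}"
    and A3: "\<omega> > 0" "onorm (\<lambda>x. A *v x) \<le> exp (- \<omega>)"
    and A6_i: "M > 1" "AE z in \<theta>. Dlip f z \<le> ennreal M"
    and A6_ii: "\<alpha> > 0" "(\<integral>\<^sup>+ x. ennreal (exp (\<alpha> * norm x)) \<partial>\<mu>0) < \<infinity>"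
       "(\<integral>\<^sup>+ z. ennreal (exp (\<alpha> * D1 f z)) \<partial>\<theta>) < \<infinity>"
    and N: "N \<ge> 1"
  shows "AE w in P.
    W1 (emp N (\<lambda>i. particle A \<delta> f X0 \<epsilon> N (Suc n) i w)) (nonlin A \<delta> f \<theta> \<mu>0 (Suc n))
    \<le> W1 (emp N (\<lambda>i. aux A \<delta> f \<theta> \<mu>0 X0 \<epsilon> N (Suc n) i w)) (nonlin A \<delta> f \<theta> \<mu>0 (Suc n))
      + ennreal (\<delta> * M) * (\<Sum>k\<le>n. ennreal ((exp (- \<omega>) + 2 * \<delta> * M) ^ (n - k))
          * W1 (emp N (\<lambda>i. aux A \<delta> f \<theta> \<mu>0 X0 \<epsilon> N k i w)) (nonlin A \<delta> f \<theta> \<mu>0 k))"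
proof -
  define mu where "mu k = nonlin A \<delta> f \<theta> \<mu>0 k" for k
  have muS: "mu (Suc k) = Psi A \<delta> f \<theta> (mu k)" for k by (simp add: mu_def nonlin_def)
  have Mpos: "M > 0" using A6_i by simp
  have D1m: "(\<lambda>z. D1 f z) \<in> borel_measurable \<theta>"
    by (rule D1_meas[of f, OF f_meas[OF return0_P1] theta(2)])
  have D1i: "(\<integral>\<^sup>+ z. ennreal (D1 f z) \<partial>\<theta>) < \<infinity>"
    by (rule D1_int[OF D1m A6_ii(1) A6_ii(3)])
  have muP1: "mu k \<in> P1" for k
  proof (induction k)
    case 0 then show ?case using mu0 by (simp add: mu_def nonlin_def)
  next
    case (Suc k) then show ?case
      unfolding muS by (rule Psi_P1[OF _ theta f_meas Mpos A6_i(2) D1i delta])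
  qed
  have AEall: "AE w in P. \<forall>k. \<forall>i\<in>{1..N}. Dlip f (\<epsilon> i (Suc k) w) \<le> ennreal M"
    unfolding AE_all_countable
  proof (intro allI AE_finite_allI)
    fix k i assume i: "i \<in> {1..N}"
    then have "i \<ge> 1" by simp
    have "AE z in distr P borel (\<epsilon> i (Suc k)). Dlip f z \<le> ennreal M"
    proof -
      have e: "distr P borel (\<epsilon> i (Suc k)) = \<theta>" by (rule eps_law) (use \<open>i \<ge> 1\<close> in simp_all)
      show ?thesis unfolding e by (rule A6_i(2))
    qed
    moreover have em: "\<epsilon> i (Suc k) \<in> borel_measurable P" by (rule eps_meas) (use \<open>i \<ge> 1\<close> in simp_all)
    ultimately show "AE w in P. Dlip f (\<epsilon> i (Suc k) w) \<le> ennreal M"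
      using AE_distrD[OF em] by blast
  qed simp
  define ch where "ch = exp (- \<omega>) + 2 * \<delta> * M"
  have chi0: "ch \<ge> 0" using delta Mpos by (simp add: ch_def)
  have dM0: "\<delta> * M \<ge> 0" using delta Mpos by simp
  show ?thesis
  proof (rule eventually_mono[OF AEall])
    fix w assume Dw: "\<forall>k. \<forall>i\<in>{1..N}. Dlip f (\<epsilon> i (Suc k) w) \<le> ennreal M"
    define x where "x k = (\<lambda>i. particle A \<delta> f X0 \<epsilon> N k i w)" for k
    define y where "y k = (\<lambda>i. aux A \<delta> f \<theta> \<mu>0 X0 \<epsilon> N k i w)" for k
    define a where "a k = (\<Sum>i\<in>{1..N}. ennreal (dist (x k i) (y k i))) / of_nat N" for k
    define V where "V k = W1 (emp N (y k)) (mu k)" for k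
    have xS: "x (Suc k) i = A *v x k i + \<delta> *\<^sub>R f (x k i) (emp N (x k)) (\<epsilon> i (Suc k) w)" for k i
      by (simp add: x_def)
    have yS: "y (Suc k) i = A *v y k i + \<delta> *\<^sub>R f (y k i) (mu k) (\<epsilon> i (Suc k) w)" for k i
      by (simp add: y_def mu_def)
    have Anorm: "norm (A *v v) \<le> exp (- \<omega>) * norm v" for v
      using onorm[OF matrix_vector_mul_bounded_linear, of A v] A3(2)
      by (meson mult_right_mono norm_ge_zero order_trans)
    have step: "a (Suc k) \<le> ennreal ch * a k + ennreal (\<delta> * M) * V k" for k
    proof -
      define W where "W = W1 (emp N (x k)) (mu k)"
      have pt: "ennreal (dist (x (Suc k) i) (y (Suc k) i)) \<le> ennreal (exp (- \<omega>)) * ennreal (dist (x k i) (y k i))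
          + ennreal (\<delta> * M) * (ennreal (dist (x k i) (y k i)) + W)" if i: "i \<in> {1..N}" for i
      proof -
        let ?u = "f (x k i) (emp N (x k)) (\<epsilon> i (Suc k) w)" and ?v = "f (y k i) (mu k) (\<epsilon> i (Suc k) w)"
        have "dist (x (Suc k) i) (y (Suc k) i) = norm (A *v (x k i - y k i) + \<delta> *\<^sub>R (?u - ?v))"
          unfolding xS yS dist_norm by (simp add: matrix_vector_mult_diff_distrib algebra_simps)
        also have "\<dots> \<le> norm (A *v (x k i - y k i)) + \<delta> * dist ?u ?v"
          using delta by (metis norm_triangle_ineq norm_scaleR abs_of_nonneg dist_norm)
        also have "\<dots> \<le> exp (- \<omega>) * dist (x k i) (y k i) + \<delta> * dist ?u ?v"
          using Anorm[of "x k i - y k i"] by (simp add: dist_norm)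
        finally have "ennreal (dist (x (Suc k) i) (y (Suc k) i)) \<le> ennreal (exp (- \<omega>)) * ennreal (dist (x k i) (y k i))
            + ennreal \<delta> * ennreal (dist ?u ?v)"
          using delta by (simp add: ennreal_plus[symmetric] ennreal_mult[symmetric] ennreal_leI del: ennreal_plus)
        also have "ennreal (dist ?u ?v) \<le> ennreal M * (ennreal (dist (x k i) (y k i)) + W)"
          unfolding W_def
          by (rule lip) (use Dw i Mpos muP1 emp_P1[OF N] in auto)
        finally show ?thesis
          using delta Mpos by (simp add: ennreal_mult mult.assoc mult_left_mono add_mono)
      qed
      have "a (Suc k) \<le> (\<Sum>i\<in>{1..N}. ennreal (exp (- \<omega>)) * ennreal (dist (x k i) (y k i))
          + ennreal (\<delta> * M) * (ennreal (dist (x k i) (y k i)) + W)) / of_nat N"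
        unfolding a_def by (intro divide_right_mono_ennreal sum_mono pt)
      also have "\<dots> = ennreal (exp (- \<omega>)) * a k + ennreal (\<delta> * M) * (a k + W)"
        unfolding a_def by (rule sum_div_alg[OF N])
      also have "W \<le> a k + V k"
        unfolding W_def a_def V_def by (rule glue[OF N])
      then have "ennreal (exp (- \<omega>)) * a k + ennreal (\<delta> * M) * (a k + W)
          \<le> ennreal (exp (- \<omega>)) * a k + ennreal (\<delta> * M) * (a k + (a k + V k))"
        by (intro add_mono mult_left_mono) simp_all
      also have "\<dots> = ennreal ch * a k + ennreal (\<delta> * M) * V k"
      proof -
        have "ch = exp (- \<omega>) + \<delta> * M + \<delta> * M" unfolding ch_def by simp
        then have ce: "ennreal ch = ennreal (exp (- \<omega>)) + ennreal (\<delta> * M) + ennreal (\<delta> * M)"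
          using dM0 by (simp only: ennreal_plus[symmetric] add_nonneg_nonneg exp_ge_zero)
        show ?thesis unfolding ce by (simp add: algebra_simps)
      qed
      finally show ?thesis .
    qed
    have ind: "a k \<le> ennreal (\<delta> * M) * (\<Sum>j<k. ennreal (ch ^ (k - Suc j)) * V j)" for k
    proof (induction k)
      case 0
      have "x 0 = y 0" by (simp add: x_def y_def)
      then show ?case by (simp add: a_def)
    next
      case (Suc k)
      have "a (Suc k) \<le> ennreal ch * a k + ennreal (\<delta> * M) * V k" by (rule step)
      also have "\<dots> \<le> ennreal ch * (ennreal (\<delta> * M) * (\<Sum>j<k. ennreal (ch ^ (k - Suc j)) * V j)) + ennreal (\<delta> * M) * V k"
        by (intro add_mono mult_left_mono Suc.IH) simp_all
      also have "ennreal ch * (\<Sum>j<k. ennreal (ch ^ (k - Suc j)) * V j) = (\<Sum>j<k. ennreal (ch ^ (Suc k - Suc j)) * V j)"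
        unfolding sum_distrib_left
      proof (intro sum.cong refl)
        fix j assume "j \<in> {..<k}"
        then have "Suc k - Suc j = Suc (k - Suc j)" by simp
        then show "ennreal ch * (ennreal (ch ^ (k - Suc j)) * V j) = ennreal (ch ^ (Suc k - Suc j)) * V j"
          using chi0 by (simp add: ennreal_mult zero_le_power mult.assoc)
      qed
      then have "ennreal ch * (ennreal (\<delta> * M) * (\<Sum>j<k. ennreal (ch ^ (k - Suc j)) * V j)) + ennreal (\<delta> * M) * V k
          = ennreal (\<delta> * M) * ((\<Sum>j<k. ennreal (ch ^ (Suc k - Suc j)) * V j) + V k)"
      proof -
        have "ennreal ch * (ennreal (\<delta> * M) * (\<Sum>j<k. ennreal (ch ^ (k - Suc j)) * V j))
            = ennreal (\<delta> * M) * (ennreal ch * (\<Sum>j<k. ennreal (ch ^ (k - Suc j)) * V j))"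
          by (rule mult.left_commute)
        then show ?thesis unfolding \<open>ennreal ch * (\<Sum>j<k. ennreal (ch ^ (k - Suc j)) * V j) = (\<Sum>j<k. ennreal (ch ^ (Suc k - Suc j)) * V j)\<close>
          by (simp only: distrib_left)
      qed
      also have "(\<Sum>j<k. ennreal (ch ^ (Suc k - Suc j)) * V j) + V k = (\<Sum>j<Suc k. ennreal (ch ^ (Suc k - Suc j)) * V j)"
        by (simp only: sum.lessThan_Suc diff_self_eq_0 power_0 ennreal_1 mult_1)
      finally show ?case .
    qed
    have "W1 (emp N (x (Suc n))) (mu (Suc n)) \<le> a (Suc n) + V (Suc n)"
      unfolding a_def V_def by (rule glue[OF N])
    also have "\<dots> \<le> V (Suc n) + ennreal (\<delta> * M) * (\<Sum>j<Suc n. ennreal (ch ^ (Suc n - Suc j)) * V j)"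
      using ind[of "Suc n"] by (simp add: add.commute add_left_mono)
    also have "(\<Sum>j<Suc n. ennreal (ch ^ (Suc n - Suc j)) * V j) = (\<Sum>j\<le>n. ennreal (ch ^ (n - j)) * V j)"
      by (simp add: lessThan_Suc_atMost)
    finally show "W1 (emp N (\<lambda>i. particle A \<delta> f X0 \<epsilon> N (Suc n) i w)) (nonlin A \<delta> f \<theta> \<mu>0 (Suc n))
    \<le> W1 (emp N (\<lambda>i. aux A \<delta> f \<theta> \<mu>0 X0 \<epsilon> N (Suc n) i w)) (nonlin A \<delta> f \<theta> \<mu>0 (Suc n))
      + ennreal (\<delta> * M) * (\<Sum>k\<le>n. ennreal ((exp (- \<omega>) + 2 * \<delta> * M) ^ (n - k))
          * W1 (emp N (\<lambda>i. aux A \<delta> f \<theta> \<mu>0 X0 \<epsilon> N k i w)) (nonlin A \<delta> f \<theta> \<mu>0 k))"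
      unfolding x_def V_def y_def mu_def ch_def .
  qed
qed


end
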